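(* Let $H\subset Y$ be closed. Then $\mathcal R_n^f(H,Z)$ is a $G_\delta$-subset of $C(X,M)$ (with the source limitation topology) in each of the following cases: (i) $Z\subset M$ is closed and $X,Y$ are metric spaces; (ii) $Z=M$ and $X,Y$ are paracompact.
   Context: Let $(M,\rho)$ be a complete metric space, $Z\subset M$ closed, $n\ge0$, and $f\colon X\to Y$ a perfect surjection between paracompact spaces with $\dim f\le n$. For $H\subset Y$, $\mathcal R_n^f(H,Z)=\{g\in C(X,M):\dim\big(g(f^{-1}(y))\cap Z\big)\le n\ \forall y\in H\}$. The source limitation topology on $C(X,M)$ has as neighborhood base at $f$ the sets $\{g:\rho(g(x),f(x))<\varepsilon(x)\ \forall x\in X\}$, $\varepsilon\colon X\to(0,1]$ continuous. *)

theory Defs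
  imports "HOL-Analysis.Analysis" "HOL-Library.FuncSet"
begin

definition locally_finite_in :: "'a topology \<Rightarrow> 'a set set \<Rightarrow> bool" where
  "locally_finite_in X \<V> \<longleftrightarrow>
     (\<forall>x\<in>topspace X. \<exists>N. openin X N \<and> x \<in> N \<and> finite {V\<in>\<V>. V \<inter> N \<noteq> {}})"

definition paracompact_space :: "'a topology \<Rightarrow> bool" where
  "paracompact_space X \<longleftrightarrow> Hausdorff_space X \<and>
     (\<forall>\<U>. (\<forall>U\<in>\<U>. openin X U) \<and> \<Union>\<U> = topspace X \<longrightarrow>
        (\<exists>\<V>. (\<forall>V\<in>\<V>. openin X V) \<and> \<Union>\<V> = topspace X \<and>
              (\<forall>V\<in>\<V>. \<exists>U\<in>\<U>. V \<subseteq> U) \<and> locally_finite_in X \<V>))"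

definition cov_dim_le :: "'a topology \<Rightarrow> nat \<Rightarrow> bool" where
  "cov_dim_le T n \<longleftrightarrow>
     (\<forall>\<U>. finite \<U> \<and> (\<forall>U\<in>\<U>. openin T U) \<and> \<Union>\<U> = topspace T \<longrightarrow>
        (\<exists>\<V>. finite \<V> \<and> (\<forall>V\<in>\<V>. openin T V) \<and> \<Union>\<V> = topspace T \<and>
              (\<forall>V\<in>\<V>. \<exists>U\<in>\<U>. V \<subseteq> U) \<and>
              (\<forall>x\<in>topspace T. card {V\<in>\<V>. x \<in> V} \<le> n + 1)))"

definition fibre :: "'a topology \<Rightarrow> ('a \<Rightarrow> 'b) \<Rightarrow> 'b \<Rightarrow> 'a set" where
  "fibre X f y = {x \<in> topspace X. f x = y}"

definition map_dim_le :: "'a topology \<Rightarrow> 'b topology \<Rightarrow> ('a \<Rightarrow> 'b) \<Rightarrow> nat \<Rightarrow> bool" where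
  "map_dim_le X Y f n \<longleftrightarrow> (\<forall>y\<in>topspace Y. cov_dim_le (subtopology X (fibre X f y)) n)"

definition cmaps :: "'a topology \<Rightarrow> 'm metric \<Rightarrow> ('a \<Rightarrow> 'm) set" where
  "cmaps X m = {g. continuous_map X (mtopology_of m) g \<and> g \<in> extensional (topspace X)}"

definition sl_ball :: "'a topology \<Rightarrow> 'm metric \<Rightarrow> ('a \<Rightarrow> 'm) \<Rightarrow> ('a \<Rightarrow> real) \<Rightarrow> ('a \<Rightarrow> 'm) set" where
  "sl_ball X m g \<epsilon> = {h \<in> cmaps X m. \<forall>x\<in>topspace X. mdist m (h x) (g x) < \<epsilon> x}"

definition admissible_eps :: "'a topology \<Rightarrow> ('a \<Rightarrow> real) \<Rightarrow> bool" where
  "admissible_eps X \<epsilon> \<longleftrightarrow> continuous_map X euclideanreal \<epsilon> \<and> (\<forall>x\<in>topspace X. 0 < \<epsilon> x \<and> \<epsilon> x \<le> 1)"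

definition source_limitation_topology :: "'a topology \<Rightarrow> 'm metric \<Rightarrow> ('a \<Rightarrow> 'm) topology" where
  "source_limitation_topology X m = topology (\<lambda>U. U \<subseteq> cmaps X m \<and>
      (\<forall>g\<in>U. \<exists>\<epsilon>. admissible_eps X \<epsilon> \<and> sl_ball X m g \<epsilon> \<subseteq> U))"

definition Rnf :: "'a topology \<Rightarrow> 'm metric \<Rightarrow> ('a \<Rightarrow> 'b) \<Rightarrow> nat \<Rightarrow> 'b set \<Rightarrow> 'm set \<Rightarrow> ('a \<Rightarrow> 'm) set" where
  "Rnf X m f n H Z = {g \<in> cmaps X m. \<forall>y\<in>H.
      cov_dim_le (subtopology (mtopology_of m) (g ` fibre X f y \<inter> Z)) n}"

end

theory Submission
  imports Defs
begin


lemma lf_lib: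
  assumes "Defs.locally_finite_in Y \<V>" "\<Union>\<V> \<subseteq> topspace Y"
  shows "Abstract_Topology.locally_finite_in Y \<V>"
  using assms unfolding Defs.locally_finite_in_def Abstract_Topology.locally_finite_in_def
  by blast

lemma lf_sub:
  assumes "Defs.locally_finite_in Y \<A>" "\<B> \<subseteq> \<A>"
  shows "Defs.locally_finite_in Y \<B>"
  unfolding Defs.locally_finite_in_def
proof
  fix x assume "x \<in> topspace Y"
  then obtain N where N: "openin Y N" "x \<in> N" "finite {V\<in>\<A>. V \<inter> N \<noteq> {}}"
    using assms(1) unfolding Defs.locally_finite_in_def by blast
  have "{V\<in>\<B>. V \<inter> N \<noteq> {}} \<subseteq> {V\<in>\<A>. V \<inter> N \<noteq> {}}" using assms(2) by blast
  then have "finite {V\<in>\<B>. V \<inter> N \<noteq> {}}" using N(3) finite_subset by blast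
  then show "\<exists>N. openin Y N \<and> x \<in> N \<and> finite {V\<in>\<B>. V \<inter> N \<noteq> {}}" using N by blast
qed

lemma para_refine:
  assumes P: "paracompact_space X" and "\<forall>U\<in>\<U>. openin X U" and "\<Union>\<U> = topspace X"
  obtains \<V> where "\<forall>V\<in>\<V>. openin X V" "\<Union>\<V> = topspace X"
      "\<forall>V\<in>\<V>. \<exists>U\<in>\<U>. V \<subseteq> U" "Defs.locally_finite_in X \<V>"
proof -
  have "\<forall>\<U>. (\<forall>U\<in>\<U>. openin X U) \<and> \<Union>\<U> = topspace X \<longrightarrow>
        (\<exists>\<V>. (\<forall>V\<in>\<V>. openin X V) \<and> \<Union>\<V> = topspace X \<and>
              (\<forall>V\<in>\<V>. \<exists>U\<in>\<U>. V \<subseteq> U) \<and> Defs.locally_finite_in X \<V>)"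
    using P unfolding paracompact_space_def by (rule conjunct2)
  then have "\<exists>\<V>. (\<forall>V\<in>\<V>. openin X V) \<and> \<Union>\<V> = topspace X \<and>
              (\<forall>V\<in>\<V>. \<exists>U\<in>\<U>. V \<subseteq> U) \<and> Defs.locally_finite_in X \<V>"
    using assms(2,3) by blast
  then show ?thesis using that by blast
qed

lemma para_shrink:
  assumes P: "paracompact_space Y" and C: "closedin Y C"
    and loc: "\<And>c. c \<in> C \<Longrightarrow> \<exists>U. openin Y U \<and> c \<in> U \<and> Y closure_of U \<inter> D = {}"
  shows "\<exists>G. openin Y G \<and> C \<subseteq> G \<and> Y closure_of G \<inter> D = {}"
proof -
  define \<U> where "\<U> = {U. openin Y U \<and> Y closure_of U \<inter> D = {}} \<union> {topspace Y - C}"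
  have "\<forall>U\<in>\<U>. openin Y U" using C by (auto simp: \<U>_def)
  moreover have "\<Union>\<U> = topspace Y"
  proof
    show "\<Union>\<U> \<subseteq> topspace Y" using \<open>\<forall>U\<in>\<U>. openin Y U\<close> openin_subset by blast
    show "topspace Y \<subseteq> \<Union>\<U>"
    proof
      fix y assume y: "y \<in> topspace Y"
      show "y \<in> \<Union>\<U>"
      proof (cases "y \<in> C")
        case True then obtain U where "openin Y U" "y \<in> U" "Y closure_of U \<inter> D = {}" using loc by blast
        then show ?thesis by (auto simp: \<U>_def)
      next
        case False then show ?thesis using y by (auto simp: \<U>_def)
      qed
    qed
  qed
  ultimately obtain \<V> where V: "\<forall>V\<in>\<V>. openin Y V" "\<Union>\<V> = topspace Y"
      "\<forall>V\<in>\<V>. \<exists>U\<in>\<U>. V \<subseteq> U" "Defs.locally_finite_in Y \<V>"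
    by (rule para_refine[OF P])
  define \<V>' where "\<V>' = {V\<in>\<V>. V \<inter> C \<noteq> {}}"
  have sub: "\<V>' \<subseteq> \<V>" by (simp add: \<V>'_def)
  have lf0: "Defs.locally_finite_in Y \<V>'"
    using V(4) sub by (rule lf_sub)
  have "\<Union>\<V>' \<subseteq> topspace Y" using sub V(2) by blast
  then have lf: "Abstract_Topology.locally_finite_in Y \<V>'"
    using lf0 by (rule_tac lf_lib) 
  have cl: "Y closure_of V \<inter> D = {}" if "V \<in> \<V>'" for V
  proof -
    have "V \<in> \<V>" "V \<inter> C \<noteq> {}" using that by (auto simp: \<V>'_def)
    then obtain U where U: "U \<in> \<U>" "V \<subseteq> U" using V(3) by blast
    have "U \<noteq> topspace Y - C" using U(2) \<open>V \<inter> C \<noteq> {}\<close> by blast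
    then have "Y closure_of U \<inter> D = {}" using U(1) unfolding \<U>_def by blast
    then show ?thesis using closure_of_mono[OF U(2)] by blast
  qed
  show ?thesis
  proof (intro exI conjI)
    show "openin Y (\<Union>\<V>')" using V(1) sub by blast
    show "C \<subseteq> \<Union>\<V>'"
    proof
      fix c assume "c \<in> C"
      then have "c \<in> topspace Y" using C closedin_subset by blast
      then obtain V where "V \<in> \<V>" "c \<in> V" using V(2) by blast
      then show "c \<in> \<Union>\<V>'" using \<open>c \<in> C\<close> unfolding \<V>'_def by blast
    qed
    have "Y closure_of \<Union>\<V>' = \<Union>((\<lambda>S. Y closure_of S) ` \<V>')"
      by (rule closure_of_locally_finite_Union[OF lf])
    then show "Y closure_of \<Union>\<V>' \<inter> D = {}" using cl by auto
  qed
qed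

lemma para_regular_aux:
  assumes P: "paracompact_space Y" and C: "closedin Y C" and x: "x \<in> topspace Y" "x \<notin> C"
  shows "\<exists>G. openin Y G \<and> C \<subseteq> G \<and> x \<notin> Y closure_of G"
proof -
  have H: "Hausdorff_space Y" using P by (simp add: paracompact_space_def)
  have "\<exists>U. openin Y U \<and> c \<in> U \<and> Y closure_of U \<inter> {x} = {}" if "c \<in> C" for c
  proof -
    have "c \<in> topspace Y" "c \<noteq> x" using that x C closedin_subset by auto
    then obtain U W where "openin Y U" "openin Y W" "c \<in> U" "x \<in> W" "disjnt U W"
      using H x unfolding Hausdorff_space_def by metis
    then have "W \<inter> Y closure_of U = {}"
      using openin_Int_closure_of_eq_empty by (metis disjnt_def inf_commute)
    then show ?thesis using \<open>openin Y U\<close> \<open>c \<in> U\<close> \<open>x \<in> W\<close> by blast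
  qed
  then show ?thesis using para_shrink[OF P C, of "{x}"] by blast
qed

lemma para_open_nbhd:
  assumes P: "paracompact_space Y" and V: "openin Y V" and x: "x \<in> V"
  shows "\<exists>A. openin Y A \<and> x \<in> A \<and> Y closure_of A \<subseteq> V"
proof -
  have C: "closedin Y (topspace Y - V)" using V by (simp add: closedin_diff)
  have xs: "x \<in> topspace Y" using V x openin_subset by blast
  obtain G where G: "openin Y G" "topspace Y - V \<subseteq> G" "x \<notin> Y closure_of G"
    using para_regular_aux[OF P C xs] x by blast
  define A where "A = topspace Y - Y closure_of G"
  have "openin Y A" by (simp add: A_def openin_diff)
  moreover have "x \<in> A" using G xs by (simp add: A_def)
  moreover have "G \<inter> Y closure_of A = {}"
    using openin_Int_closure_of_eq_empty[OF G(1)] closure_of_subset[of G Y] openin_subset[OF G(1)]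
    by (auto simp: A_def)
  then have "Y closure_of A \<subseteq> V" using G(2) closure_of_subset_topspace by fastforce
  ultimately show ?thesis by blast
qed

lemma para_normal:
  assumes P: "paracompact_space Y"
  shows "normal_space Y"
  unfolding normal_space_def
proof (intro allI impI)
  fix S T assume ST: "closedin Y S \<and> closedin Y T \<and> disjnt S T"
  have "\<exists>U. openin Y U \<and> c \<in> U \<and> Y closure_of U \<inter> T = {}" if "c \<in> S" for c
  proof -
    have "openin Y (topspace Y - T)" "c \<in> topspace Y - T"
      using ST that closedin_subset by (auto simp: disjnt_def)
    then obtain A where "openin Y A" "c \<in> A" "Y closure_of A \<subseteq> topspace Y - T"
      using para_open_nbhd[OF P] by blast
    then show ?thesis by blast
  qed
  then obtain G where G: "openin Y G" "S \<subseteq> G" "Y closure_of G \<inter> T = {}"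
    using para_shrink[OF P, of S T] ST by blast
  show "\<exists>U V. openin Y U \<and> openin Y V \<and> S \<subseteq> U \<and> T \<subseteq> V \<and> disjnt U V"
  proof (intro exI conjI)
    show "openin Y G" by fact
    show "openin Y (topspace Y - Y closure_of G)" by (simp add: openin_diff)
    show "S \<subseteq> G" by fact
    show "T \<subseteq> topspace Y - Y closure_of G" using G ST closedin_subset by blast
    show "disjnt G (topspace Y - Y closure_of G)"
      using closure_of_subset[of G Y] openin_subset[OF G(1)] by (auto simp: disjnt_def)
  qed
qed



lemma cont_Max:
  assumes "finite F" "F \<noteq> {}" "\<And>V. V \<in> F \<Longrightarrow> continuous_map Y euclideanreal (h V)"
  shows "continuous_map Y euclideanreal (\<lambda>y. Max ((\<lambda>V. h V y) ` F))"
  using assms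
proof (induction F rule: finite_ne_induct)
  case (singleton x) then show ?case by simp
next
  case (insert x F)
  have eq: "(\<lambda>y. Max ((\<lambda>V. h V y) ` insert x F)) = (\<lambda>y. max (h x y) (Max ((\<lambda>V. h V y) ` F)))"
    using insert by (auto simp: Max_insert)
  show ?case unfolding eq using insert by (intro continuous_map_real_max) auto
qed

lemma para_func:
  assumes P: "paracompact_space Y" and opn: "\<forall>i\<in>I. openin Y (U i)" and pos: "\<forall>i\<in>I. 0 < c i"
    and cov: "topspace Y \<subseteq> (\<Union>i\<in>I. U i)"
  shows "\<exists>\<phi>. continuous_map Y euclideanreal \<phi> \<and>
     (\<forall>y\<in>topspace Y. 0 < \<phi> y \<and> \<phi> y \<le> 1 \<and> (\<exists>i\<in>I. y \<in> U i \<and> \<phi> y \<le> c i))"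
proof -
  have N: "normal_space Y" by (rule para_normal[OF P])
  have "\<forall>U\<in>U ` I. openin Y U" using opn by auto
  moreover have "\<Union>(U ` I) = topspace Y"
  proof
    show "\<Union>(U ` I) \<subseteq> topspace Y" using opn openin_subset by blast
  qed (rule cov)
  ultimately obtain \<V> where V: "\<forall>V\<in>\<V>. openin Y V" "\<Union>\<V> = topspace Y"
      "\<forall>V\<in>\<V>. \<exists>W\<in>U ` I. V \<subseteq> W" "Defs.locally_finite_in Y \<V>"
    by (rule para_refine[OF P])
  define \<A> where "\<A> = {A. openin Y A \<and> (\<exists>V\<in>\<V>. Y closure_of A \<subseteq> V)}"
  have "\<forall>A\<in>\<A>. openin Y A" by (simp add: \<A>_def)
  moreover have "\<Union>\<A> = topspace Y"
  proof
    show "\<Union>\<A> \<subseteq> topspace Y" using openin_subset by (auto simp: \<A>_def)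
    show "topspace Y \<subseteq> \<Union>\<A>"
    proof
      fix y assume "y \<in> topspace Y"
      then obtain V where "V \<in> \<V>" "y \<in> V" using V(2) by blast
      then obtain A where "openin Y A" "y \<in> A" "Y closure_of A \<subseteq> V"
        using para_open_nbhd[OF P, of V y] V(1) by blast
      then have "A \<in> \<A>" using \<open>V \<in> \<V>\<close> unfolding \<A>_def by blast
      then show "y \<in> \<Union>\<A>" using \<open>y \<in> A\<close> by blast
    qed
  qed
  ultimately obtain \<B> where B: "\<forall>B\<in>\<B>. openin Y B" "\<Union>\<B> = topspace Y"
      "\<forall>B\<in>\<B>. \<exists>A\<in>\<A>. B \<subseteq> A" "Defs.locally_finite_in Y \<B>"
    by (rule para_refine[OF P])
  define CC where "CC V = \<Union>((\<lambda>S. Y closure_of S) ` {B\<in>\<B>. Y closure_of B \<subseteq> V})" for V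
  have CCclosed: "closedin Y (CC V)" for V
  proof -
    have l1: "Defs.locally_finite_in Y {B\<in>\<B>. Y closure_of B \<subseteq> V}"
      by (rule lf_sub[OF B(4)]) blast
    have l2: "\<Union>{B\<in>\<B>. Y closure_of B \<subseteq> V} \<subseteq> topspace Y" using B(2) by blast
    have "Abstract_Topology.locally_finite_in Y {B\<in>\<B>. Y closure_of B \<subseteq> V}"
      by (rule lf_lib[OF l1 l2])
    then show ?thesis unfolding CC_def by (rule closedin_Union_locally_finite_closure)
  qed
  have CCsub: "CC V \<subseteq> V" for V by (auto simp: CC_def)
  have CCcov: "\<exists>V\<in>\<V>. y \<in> CC V" if y: "y \<in> topspace Y" for y
  proof -
    obtain B where B1: "B \<in> \<B>" "y \<in> B" using B(2) y by blast
    then obtain A where A1: "A \<in> \<A>" "B \<subseteq> A" using B(3) by blast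
    then obtain V where V1: "V \<in> \<V>" "Y closure_of A \<subseteq> V" unfolding \<A>_def by blast
    have "Y closure_of B \<subseteq> Y closure_of A" by (rule closure_of_mono[OF A1(2)])
    then have cB: "Y closure_of B \<subseteq> V" using V1(2) by (rule order_trans)
    have "B \<subseteq> topspace Y" using B(1) B1(1) openin_subset by blast
    then have "y \<in> Y closure_of B" using B1(2) closure_of_subset by blast
    moreover have "Y closure_of B \<in> (\<lambda>S. Y closure_of S) ` {B\<in>\<B>. Y closure_of B \<subseteq> V}"
      using B1(1) cB by blast
    ultimately have "y \<in> CC V" unfolding CC_def by blast
    then show ?thesis using V1(1) by blast
  qed
  have exU: "\<exists>\<psi>. continuous_map Y (top_of_set {0..(1::real)}) \<psi> \<and> \<psi> ` (topspace Y - V) \<subseteq> {0} \<and> \<psi> ` CC V \<subseteq> {1}"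
    if "V \<in> \<V>" for V
  proof -
    have c1: "closedin Y (topspace Y - V)" using V(1) that by (simp add: closedin_diff)
    have d1: "disjnt (topspace Y - V) (CC V)" using CCsub by (auto simp: disjnt_def)
    obtain f where "continuous_map Y (top_of_set {0..(1::real)}) f" "f ` (topspace Y - V) \<subseteq> {0}" "f ` CC V \<subseteq> {1}"
      using Urysohn_lemma[OF N c1 CCclosed[of V] d1, of 0 1] by auto
    then show ?thesis by blast
  qed
  define \<psi> where "\<psi> V = (SOME \<psi>. continuous_map Y (top_of_set {0..(1::real)}) \<psi> \<and> \<psi> ` (topspace Y - V) \<subseteq> {0} \<and> \<psi> ` CC V \<subseteq> {1})" for V
  have psi: "continuous_map Y (top_of_set {0..(1::real)}) (\<psi> V) \<and> \<psi> V ` (topspace Y - V) \<subseteq> {0} \<and> \<psi> V ` CC V \<subseteq> {1}"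
    if "V \<in> \<V>" for V
    unfolding \<psi>_def by (rule someI_ex[OF exU[OF that]])
  have psic: "continuous_map Y euclideanreal (\<psi> V)" if "V \<in> \<V>" for V
    using psi[OF that] by (simp add: continuous_map_in_subtopology)
  have psib: "0 \<le> \<psi> V y \<and> \<psi> V y \<le> 1" if "V \<in> \<V>" "y \<in> topspace Y" for V y
    using psi[OF that(1)] that(2) unfolding continuous_map_in_subtopology by (auto simp: Pi_iff)
  have psi0: "\<psi> V y = 0" if "V \<in> \<V>" "y \<in> topspace Y" "y \<notin> V" for V y
    using psi[OF that(1)] that(2,3) by blast
  have psi1: "\<psi> V y = 1" if "V \<in> \<V>" "y \<in> CC V" for V y
    using psi[OF that(1)] that(2) by blast
  define iV where "iV V = (SOME i. i \<in> I \<and> V \<subseteq> U i)" for V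
  have iV: "iV V \<in> I \<and> V \<subseteq> U (iV V)" if "V \<in> \<V>" for V
  proof -
    have ex: "\<exists>i. i \<in> I \<and> V \<subseteq> U i" using V(3) that by blast
    show ?thesis unfolding iV_def by (rule someI_ex[OF ex])
  qed
  define a where "a V = min 1 (c (iV V))" for V
  have apos: "0 < a V" "a V \<le> 1" "a V \<le> c (iV V)" if "V \<in> \<V>" for V
    using iV[OF that] pos by (auto simp: a_def)
  define g where "g y V = a V * \<psi> V y" for y V
  define \<phi> where "\<phi> y = Max (g y ` {V\<in>\<V>. y \<in> V})" for y
  have locfin: "\<exists>N. openin Y N \<and> y \<in> N \<and> finite {V\<in>\<V>. V \<inter> N \<noteq> {}}" if "y \<in> topspace Y" for y
    using V(4) that unfolding Defs.locally_finite_in_def by blast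
  have fin: "finite {V\<in>\<V>. y \<in> V}" if y: "y \<in> topspace Y" for y
  proof -
    obtain N where "openin Y N" "y \<in> N" "finite {V\<in>\<V>. V \<inter> N \<noteq> {}}" using locfin[OF y] by blast
    then show ?thesis by (rule_tac finite_subset[of _ "{V\<in>\<V>. V \<inter> N \<noteq> {}}"]) auto
  qed
  have key: "\<phi> y = Max (g y ` F)" if y: "y \<in> topspace Y" and F: "finite F" "F \<subseteq> \<V>" "{V\<in>\<V>. y \<in> V} \<subseteq> F" for y F
  proof -
    obtain V0 where V0: "V0 \<in> \<V>" "y \<in> CC V0" using CCcov y by blast
    have V0': "V0 \<in> {V\<in>\<V>. y \<in> V}" using V0 CCsub by blast
    let ?T = "{V\<in>\<V>. y \<in> V}"
    have gV0: "0 < g y V0" using psi1[OF V0] apos[OF V0(1)] by (simp add: g_def)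
    have finT: "finite ?T" using fin[OF y] .
    have "Max (g y ` F) \<le> Max (g y ` ?T)"
    proof (subst Max_le_iff)
      show "finite (g y ` F)" using F by simp
      show "g y ` F \<noteq> {}" using V0' F by blast
      show "\<forall>a\<in>g y ` F. a \<le> Max (g y ` ?T)"
      proof
        fix t assume "t \<in> g y ` F"
        then obtain V where "V \<in> F" "t = g y V" by blast
        show "t \<le> Max (g y ` ?T)"
        proof (cases "y \<in> V")
          case True then show ?thesis using \<open>V \<in> F\<close> F finT \<open>t = g y V\<close> by (intro Max_ge) auto
        next
          case False
          then have "t = 0" using psi0[of V y] \<open>V \<in> F\<close> F y \<open>t = g y V\<close> by (auto simp: g_def)
          also have "0 \<le> g y V0" using gV0 by simp
          also have "\<dots> \<le> Max (g y ` ?T)" using V0' finT by (intro Max_ge) auto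
          finally show ?thesis .
        qed
      qed
    qed
    moreover have "Max (g y ` ?T) \<le> Max (g y ` F)"
      using F V0' by (intro Max_mono) auto
    ultimately show ?thesis unfolding \<phi>_def by simp
  qed
  have gc: "continuous_map Y euclideanreal (\<lambda>y. g y V)" if "V \<in> \<V>" for V
    unfolding g_def by (intro continuous_map_real_mult_left psic that)
  have cont: "continuous_map Y euclideanreal \<phi>"
    unfolding continuous_map_def
  proof (intro conjI allI impI)
    show "\<phi> \<in> topspace Y \<rightarrow> topspace euclideanreal" by simp
    fix W :: "real set" assume W: "openin euclideanreal W"
    show "openin Y {x \<in> topspace Y. \<phi> x \<in> W}"
    proof (subst openin_subopen, intro ballI)
      fix y0 assume y0: "y0 \<in> {x \<in> topspace Y. \<phi> x \<in> W}"
      obtain N where N: "openin Y N" "y0 \<in> N" "finite {V\<in>\<V>. V \<inter> N \<noteq> {}}" using locfin y0 by blast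
      define F where "F = {V\<in>\<V>. V \<inter> N \<noteq> {}}"
      have Fsub: "{V\<in>\<V>. y \<in> V} \<subseteq> F" if "y \<in> N" for y using that by (auto simp: F_def)
      obtain V0 where V0: "V0 \<in> \<V>" "y0 \<in> CC V0" using CCcov y0 by blast
      have "F \<noteq> {}" using V0 CCsub N(2) by (auto simp: F_def)
      have gFc: "continuous_map Y euclideanreal (\<lambda>y. Max ((\<lambda>V. g y V) ` F))"
        by (rule cont_Max) (use N(3) \<open>F \<noteq> {}\<close> gc in \<open>auto simp: F_def\<close>)
      let ?T = "N \<inter> {y \<in> topspace Y. Max ((\<lambda>V. g y V) ` F) \<in> W}"
      have eqN: "\<phi> y = Max (g y ` F)" if "y \<in> N" for y
        using key[of y F] N openin_subset Fsub[OF that] that by (auto simp: F_def)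
      show "\<exists>T. openin Y T \<and> y0 \<in> T \<and> T \<subseteq> {x \<in> topspace Y. \<phi> x \<in> W}"
      proof (intro exI conjI)
        show "openin Y ?T" using N(1) openin_continuous_map_preimage[OF gFc W] by blast
        show "y0 \<in> ?T" using y0 N(2) eqN[OF N(2)] by auto
        show "?T \<subseteq> {x \<in> topspace Y. \<phi> x \<in> W}" using eqN by auto
      qed
    qed
  qed
  show ?thesis
  proof (intro exI conjI ballI)
    show "continuous_map Y euclideanreal \<phi>" by (rule cont)
    fix y assume y: "y \<in> topspace Y"
    let ?T = "{V\<in>\<V>. y \<in> V}"
    obtain V0 where V0: "V0 \<in> \<V>" "y \<in> CC V0" using CCcov y by blast
    have V0': "V0 \<in> ?T" using V0 CCsub by blast
    have finT: "finite ?T" using fin[OF y] .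
    have gV0: "0 < g y V0" using psi1[OF V0] apos[OF V0(1)] by (simp add: g_def)
    have "g y V0 \<le> \<phi> y" unfolding \<phi>_def using V0' finT by (intro Max_ge) auto
    then show "0 < \<phi> y" using gV0 by simp
    have "\<phi> y \<in> g y ` ?T" unfolding \<phi>_def using V0' finT by (intro Max_in) auto
    then obtain V where V: "V \<in> \<V>" "y \<in> V" "\<phi> y = g y V" by blast
    have "g y V \<le> a V" using psib[OF V(1) y] apos[OF V(1)] by (simp add: g_def mult_left_le)
    then show "\<phi> y \<le> 1" using V apos[OF V(1)] by simp
    show "\<exists>i\<in>I. y \<in> U i \<and> \<phi> y \<le> c i"
      using iV[OF V(1)] V \<open>g y V \<le> a V\<close> apos[OF V(1)] by (intro bexI[of _ "iV V"]) auto
  qed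
qed



definition goodk :: "'m metric \<Rightarrow> nat \<Rightarrow> nat \<Rightarrow> 'm set \<Rightarrow> bool" where
  "goodk m n k A \<longleftrightarrow> (\<exists>\<W>. finite \<W> \<and>
     (\<forall>W\<in>\<W>. openin (mtopology_of m) W \<and> (\<exists>c\<in>mspace m. W \<subseteq> mball_of m c (1 / real (Suc k)))) \<and>
     A \<subseteq> \<Union>\<W> \<and> (\<forall>x\<in>mspace m. card {W\<in>\<W>. x \<in> W} \<le> n + 1))"

lemma mtop_eq: "Metric_space.mtopology (mspace m) (mdist m) = mtopology_of m"
  by (simp add: mtopology_of_def)

lemma mball_eq: "Metric_space.mball (mspace m) (mdist m) = mball_of m"
  by (simp add: mball_of_def)

lemma lebesgue_m:
  assumes "compactin (mtopology_of m) S" "S \<subseteq> \<Union>\<C>" "\<And>U. U \<in> \<C> \<Longrightarrow> openin (mtopology_of m) U"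
  shows "\<exists>\<epsilon>>0. \<forall>x \<in> S. \<exists>U \<in> \<C>. mball_of m x \<epsilon> \<subseteq> U"
proof -
  interpret M: Metric_space "mspace m" "mdist m" by simp
  show ?thesis using M.lebesgue_number[of S \<C>] assms unfolding mtop_eq mball_eq by blast
qed

lemma mdist_tri: "x \<in> mspace m \<Longrightarrow> y \<in> mspace m \<Longrightarrow> z \<in> mspace m \<Longrightarrow> mdist m x z \<le> mdist m x y + mdist m y z"
  by (rule Metric_space.triangle[OF Metric_space_mspace_mdist])

lemma openin_mball_of: "openin (mtopology_of m) (mball_of m x r)"
proof -
  interpret M: Metric_space "mspace m" "mdist m" by simp
  show ?thesis using M.openin_mball unfolding mtop_eq mball_eq .
qed

lemma openin_mtop_ball:
  assumes "openin (mtopology_of m) G" "x \<in> G"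
  shows "\<exists>r>0. mball_of m x r \<subseteq> G"
proof -
  interpret M: Metric_space "mspace m" "mdist m" by simp
  show ?thesis using assms M.openin_mtopology unfolding mtop_eq mball_eq by blast
qed

lemma good_to_dim:
  assumes cA: "compactin (mtopology_of m) A" and good: "\<And>k. goodk m n k A"
  shows "cov_dim_le (subtopology (mtopology_of m) A) n"
  unfolding cov_dim_le_def
proof (intro allI impI)
  fix \<U> assume U: "finite \<U> \<and> (\<forall>U\<in>\<U>. openin (subtopology (mtopology_of m) A) U) \<and>
      \<Union>\<U> = topspace (subtopology (mtopology_of m) A)"
  have AM: "A \<subseteq> mspace m" using cA compactin_subset_topspace by fastforce
  have tA: "topspace (subtopology (mtopology_of m) A) = A" using AM by auto
  have "\<forall>U\<in>\<U>. \<exists>G. openin (mtopology_of m) G \<and> U = G \<inter> A"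
    using U by (simp add: openin_subtopology)
  then obtain G where G: "\<And>U. U \<in> \<U> \<Longrightarrow> openin (mtopology_of m) (G U) \<and> U = G U \<inter> A"
    by metis
  have "A \<subseteq> \<Union>(G ` \<U>)" using U G tA by blast
  then obtain \<epsilon> where e: "\<epsilon> > 0" "\<forall>x \<in> A. \<exists>V \<in> G ` \<U>. mball_of m x \<epsilon> \<subseteq> V"
    using lebesgue_m[OF cA, of "G ` \<U>"] G by blast
  obtain k :: nat where k: "2 / \<epsilon> < real k" using reals_Archimedean2 by blast
  define r where "r = 1 / real (Suc k)"
  have r: "r > 0" "2 * r < \<epsilon>"
  proof -
    show "r > 0" by (simp add: r_def)
    have "2 / \<epsilon> < real (Suc k)" using k by simp
    then have "2 < \<epsilon> * real (Suc k)" using e(1) by (simp add: field_simps)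
    then show "2 * r < \<epsilon>" unfolding r_def by (simp add: field_simps)
  qed
  obtain \<W> where W: "finite \<W>" "\<forall>W\<in>\<W>. openin (mtopology_of m) W \<and> (\<exists>c\<in>mspace m. W \<subseteq> mball_of m c r)"
     "A \<subseteq> \<Union>\<W>" "\<forall>x\<in>mspace m. card {W\<in>\<W>. x \<in> W} \<le> n + 1"
    using good[of k] unfolding goodk_def r_def by blast
  define \<V> where "\<V> = (\<lambda>W. W \<inter> A) ` {W\<in>\<W>. W \<inter> A \<noteq> {}}"
  show "\<exists>\<V>. finite \<V> \<and> (\<forall>V\<in>\<V>. openin (subtopology (mtopology_of m) A) V) \<and>
              \<Union>\<V> = topspace (subtopology (mtopology_of m) A) \<and>
              (\<forall>V\<in>\<V>. \<exists>U\<in>\<U>. V \<subseteq> U) \<and>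
              (\<forall>x\<in>topspace (subtopology (mtopology_of m) A). card {V\<in>\<V>. x \<in> V} \<le> n + 1)"
  proof (intro exI conjI ballI)
    show "finite \<V>" using W(1) by (simp add: \<V>_def)
    show "openin (subtopology (mtopology_of m) A) V" if "V \<in> \<V>" for V
      using that W(2) unfolding \<V>_def by (auto intro: openin_subtopology_Int)
    show "\<Union>\<V> = topspace (subtopology (mtopology_of m) A)"
      unfolding tA \<V>_def using W(3) by blast
    show "\<exists>U\<in>\<U>. V \<subseteq> U" if V: "V \<in> \<V>" for V
    proof -
      obtain W where W1: "W \<in> \<W>" "W \<inter> A \<noteq> {}" "V = W \<inter> A" using V by (auto simp: \<V>_def)
      obtain a where a: "a \<in> W" "a \<in> A" using W1 by blast
      obtain c where c: "c \<in> mspace m" "W \<subseteq> mball_of m c r" using W(2) W1(1) by blast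
      have aM: "a \<in> mspace m" using a AM by blast
      have "W \<subseteq> mball_of m a \<epsilon>"
      proof
        fix y assume "y \<in> W"
        then have y: "y \<in> mspace m" "mdist m c y < r" using c by auto
        have "mdist m c a < r" using a c by auto
        then have "mdist m a c < r" by (simp add: mdist_commute)
        have "mdist m a y \<le> mdist m a c + mdist m c y" by (rule mdist_tri[OF aM c(1) y(1)])
        then show "y \<in> mball_of m a \<epsilon>" using y aM \<open>mdist m a c < r\<close> r by simp
      qed
      moreover obtain U where "U \<in> \<U>" "mball_of m a \<epsilon> \<subseteq> G U" using e(2) a(2) by blast
      ultimately have "V \<subseteq> G U \<inter> A" using W1(3) by blast
      then show ?thesis using G \<open>U \<in> \<U>\<close> by blast
    qed
    fix x assume x: "x \<in> topspace (subtopology (mtopology_of m) A)"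
    then have xM: "x \<in> mspace m" using AM tA by blast
    have "{V\<in>\<V>. x \<in> V} \<subseteq> (\<lambda>W. W \<inter> A) ` {W\<in>\<W>. x \<in> W}" unfolding \<V>_def by blast
    then have "card {V\<in>\<V>. x \<in> V} \<le> card ((\<lambda>W. W \<inter> A) ` {W\<in>\<W>. x \<in> W})"
      using W(1) by (intro card_mono) auto
    also have "\<dots> \<le> card {W\<in>\<W>. x \<in> W}" using W(1) by (intro card_image_le) auto
    also have "\<dots> \<le> n + 1" using W(4) xM by blast
    finally show "card {V\<in>\<V>. x \<in> V} \<le> n + 1" .
  qed
qed


lemma mdist_self: "x \<in> mspace m \<Longrightarrow> mdist m x x = 0" by simp

lemma nearest_point:
  assumes cA: "compactin (mtopology_of m) A" and ne: "A \<noteq> {}" and x: "x \<in> mspace m"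
  shows "\<exists>a\<in>A. \<forall>b\<in>A. mdist m x a \<le> mdist m x b"
proof -
  have c: "continuous_map (mtopology_of m) euclidean (\<lambda>y. mdist m x y)"
    by (rule continuous_map_mdist) (use x in auto)
  have "compactin euclidean ((\<lambda>y. mdist m x y) ` A)" by (rule image_compactin[OF cA c])
  then have "compact ((\<lambda>y. mdist m x y) ` A)" by simp
  then obtain s where "s \<in> (\<lambda>y. mdist m x y) ` A" "\<forall>t\<in>(\<lambda>y. mdist m x y) ` A. s \<le> t"
    using compact_attains_inf[of "(\<lambda>y. mdist m x y) ` A"] ne by blast
  then show ?thesis by blast
qed

lemma dim_to_good:
  assumes cA: "compactin (mtopology_of m) A" and dim: "cov_dim_le (subtopology (mtopology_of m) A) n"
  shows "goodk m n k A"
proof -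
  define r where "r = 1 / real (Suc k)"
  have r: "r > 0" by (simp add: r_def)
  have AM: "A \<subseteq> mspace m" using cA compactin_subset_topspace by fastforce
  have tA: "topspace (subtopology (mtopology_of m) A) = A" using AM by auto
  have "\<forall>B\<in>(\<lambda>a. mball_of m a (r/2)) ` A. openin (mtopology_of m) B"
    by (auto intro: openin_mball_of)
  moreover have "A \<subseteq> \<Union>((\<lambda>a. mball_of m a (r/2)) ` A)"
  proof
    fix a assume a: "a \<in> A"
    then have "a \<in> mspace m" using AM by blast
    then have "a \<in> mball_of m a (r/2)" using r by (simp add: mdist_self)
    then show "a \<in> \<Union>((\<lambda>a. mball_of m a (r/2)) ` A)" using a by blast
  qed
  moreover have "\<forall>\<U>. (\<forall>U \<in> \<U>. openin (mtopology_of m) U) \<and> A \<subseteq> \<Union>\<U>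
          \<longrightarrow> (\<exists>\<F>. finite \<F> \<and> \<F> \<subseteq> \<U> \<and> A \<subseteq> \<Union>\<F>)"
    using cA unfolding compactin_def by (rule conjunct2)
  ultimately have "\<exists>F. finite F \<and> F \<subseteq> (\<lambda>a. mball_of m a (r/2)) ` A \<and> A \<subseteq> \<Union>F"
    by blast
  then obtain F where F: "finite F" "F \<subseteq> (\<lambda>a. mball_of m a (r/2)) ` A" "A \<subseteq> \<Union>F"
    by blast
  define \<U> where "\<U> = (\<lambda>B. B \<inter> A) ` F"
  have "finite \<U> \<and> (\<forall>U\<in>\<U>. openin (subtopology (mtopology_of m) A) U) \<and>
      \<Union>\<U> = topspace (subtopology (mtopology_of m) A)"
  proof (intro conjI ballI)
    show "finite \<U>" using F(1) by (simp add: \<U>_def)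
    show "openin (subtopology (mtopology_of m) A) U" if "U \<in> \<U>" for U
      using that F(2) unfolding \<U>_def by (auto intro: openin_subtopology_Int openin_mball_of)
    show "\<Union>\<U> = topspace (subtopology (mtopology_of m) A)" unfolding tA \<U>_def using F(3) by blast
  qed
  then have "\<exists>\<V>. finite \<V> \<and> (\<forall>V\<in>\<V>. openin (subtopology (mtopology_of m) A) V) \<and>
              \<Union>\<V> = topspace (subtopology (mtopology_of m) A) \<and>
              (\<forall>V\<in>\<V>. \<exists>U\<in>\<U>. V \<subseteq> U) \<and>
              (\<forall>x\<in>topspace (subtopology (mtopology_of m) A). card {V\<in>\<V>. x \<in> V} \<le> n + 1)"
    by (rule dim[unfolded cov_dim_le_def, THEN spec, THEN mp])
  then obtain \<V> where V: "finite \<V>" "\<forall>V\<in>\<V>. openin (subtopology (mtopology_of m) A) V"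
      "\<Union>\<V> = A" "\<forall>V\<in>\<V>. \<exists>U\<in>\<U>. V \<subseteq> U" "\<forall>x\<in>A. card {V\<in>\<V>. x \<in> V} \<le> n + 1"
    unfolding tA by blast
  have Vsmall: "\<exists>c\<in>mspace m. V \<subseteq> mball_of m c (r/2)" if VV: "V \<in> \<V>" for V
  proof -
    obtain U where "U \<in> \<U>" "V \<subseteq> U" using V(4) VV by blast
    then obtain a where "a \<in> A" "V \<subseteq> mball_of m a (r/2)" using F(2) unfolding \<U>_def by blast
    then show ?thesis using AM by blast
  qed
  have exe: "\<exists>e>0. mball_of m a e \<inter> A \<subseteq> V" if VV: "V \<in> \<V>" "a \<in> V" for V a
  proof -
    obtain G where G: "openin (mtopology_of m) G" "V = G \<inter> A"
      using V(2) VV(1) by (auto simp: openin_subtopology)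
    obtain e where "e > 0" "mball_of m a e \<subseteq> G" using openin_mtop_ball[OF G(1)] VV(2) G(2) by blast
    then show ?thesis using G(2) by blast
  qed
  define eps where "eps V a = (SOME e. e > 0 \<and> mball_of m a e \<inter> A \<subseteq> V)" for V a
  have eps: "eps V a > 0 \<and> mball_of m a (eps V a) \<inter> A \<subseteq> V" if "V \<in> \<V>" "a \<in> V" for V a
    unfolding eps_def by (rule someI_ex) (use exe[OF that] in blast)
  define t where "t V a = min (eps V a / 2) (r / 4)" for V a
  have tpos: "t V a > 0" if "V \<in> \<V>" "a \<in> V" for V a using eps[OF that] r by (simp add: t_def)
  define Ob where "Ob V = (\<Union>a\<in>V. mball_of m a (t V a))" for V
  have keyO: "\<forall>b\<in>A - V. mdist m x a < mdist m x b"
    if V: "V \<in> \<V>" and a: "a \<in> V" and x: "x \<in> mball_of m a (t V a)" for V a x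
  proof
    fix b assume b: "b \<in> A - V"
    have aM: "a \<in> mspace m" "x \<in> mspace m" using x by auto
    have bM: "b \<in> mspace m" using b AM by blast
    have "b \<notin> mball_of m a (eps V a)" using eps[OF V a] b by blast
    then have "eps V a \<le> mdist m a b" using aM bM by simp
    moreover have "mdist m a b \<le> mdist m a x + mdist m x b" by (rule mdist_tri[OF aM(1) aM(2) bM])
    moreover have "mdist m a x < t V a" using x by simp
    moreover have "t V a \<le> eps V a / 2" by (simp add: t_def)
    moreover have "mdist m x a = mdist m a x" by (simp add: mdist_commute)
    ultimately show "mdist m x a < mdist m x b" by linarith
  qed
  define \<W> where "\<W> = Ob ` \<V>"
  show ?thesis unfolding goodk_def
  proof (intro exI conjI ballI)
    show "finite \<W>" using V(1) by (simp add: \<W>_def)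
    fix W assume "W \<in> \<W>"
    then obtain V where V1: "V \<in> \<V>" "W = Ob V" by (auto simp: \<W>_def)
    show "openin (mtopology_of m) W" unfolding V1(2) Ob_def by (intro openin_Union) (auto intro: openin_mball_of)
    obtain c where c: "c \<in> mspace m" "V \<subseteq> mball_of m c (r/2)" using Vsmall[OF V1(1)] by blast
    have "W \<subseteq> mball_of m c (1 / real (Suc k))"
    proof
      fix y assume "y \<in> W"
      then obtain a where a: "a \<in> V" "y \<in> mball_of m a (t V a)" unfolding V1(2) Ob_def by blast
      have aM: "a \<in> mspace m" "y \<in> mspace m" using a by auto
      have "mdist m c a < r/2" using c a by auto
      moreover have "mdist m a y < r/4" using a(2) by (simp add: t_def)
      moreover have "mdist m c y \<le> mdist m c a + mdist m a y" by (rule mdist_tri[OF c(1) aM])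
      ultimately have "mdist m c y < r" using r by linarith
      then show "y \<in> mball_of m c (1 / real (Suc k))" using c aM unfolding r_def by simp
    qed
    then show "\<exists>c\<in>mspace m. W \<subseteq> mball_of m c (1 / real (Suc k))" using c(1) by blast
  next
    show "A \<subseteq> \<Union>\<W>"
    proof
      fix a assume a: "a \<in> A"
      then obtain V where "V \<in> \<V>" "a \<in> V" using V(3) by blast
      moreover have "a \<in> mspace m" using AM a by blast
      ultimately have "a \<in> mball_of m a (t V a)" using tpos by (simp add: mdist_self)
      then show "a \<in> \<Union>\<W>" using \<open>V \<in> \<V>\<close> \<open>a \<in> V\<close> unfolding \<W>_def Ob_def by blast
    qed
  next
    fix x assume x: "x \<in> mspace m"
    let ?S = "{V\<in>\<V>. x \<in> Ob V}"
    have "{W\<in>\<W>. x \<in> W} \<subseteq> Ob ` ?S" unfolding \<W>_def by blast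
    then have "card {W\<in>\<W>. x \<in> W} \<le> card (Ob ` ?S)" using V(1) by (intro card_mono) auto
    also have "\<dots> \<le> card ?S" using V(1) by (intro card_image_le) auto
    also have "\<dots> \<le> n + 1"
    proof (cases "?S = {}")
      case True then show ?thesis by (simp only: card.empty)
    next
      case False
      then obtain V0 where "V0 \<in> \<V>" "x \<in> Ob V0" by blast
      then have "A \<noteq> {}" using V(3) unfolding Ob_def by blast
      then obtain a0 where a0: "a0 \<in> A" "\<forall>b\<in>A. mdist m x a0 \<le> mdist m x b"
        using nearest_point[OF cA _ x] by blast
      have "?S \<subseteq> {V\<in>\<V>. a0 \<in> V}"
      proof
        fix V assume "V \<in> ?S"
        then have VV: "V \<in> \<V>" "x \<in> Ob V" by auto
        then obtain a where a: "a \<in> V" "x \<in> mball_of m a (t V a)" unfolding Ob_def by blast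
        have aA: "a \<in> A" using a(1) VV(1) V(3) by blast
        show "V \<in> {V\<in>\<V>. a0 \<in> V}"
        proof (rule ccontr)
          assume "V \<notin> {V\<in>\<V>. a0 \<in> V}"
          then have "a0 \<in> A - V" using VV(1) a0(1) by blast
          then have "mdist m x a < mdist m x a0" using keyO[OF VV(1) a(1) a(2)] by blast
          moreover have "mdist m x a0 \<le> mdist m x a" using a0(2) aA by blast
          ultimately show False by linarith
        qed
      qed
      then have "card ?S \<le> card {V\<in>\<V>. a0 \<in> V}" using V(1) by (intro card_mono) auto
      also have "\<dots> \<le> n + 1" using V(5) a0(1) by blast
      finally show ?thesis .
    qed
    finally show "card {W\<in>\<W>. x \<in> W} \<le> n + 1" .
  qed
qed



lemma slt_istopology:
  "istopology (\<lambda>U. U \<subseteq> cmaps X m \<and> (\<forall>g\<in>U. \<exists>\<epsilon>. admissible_eps X \<epsilon> \<and> sl_ball X m g \<epsilon> \<subseteq> U))"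
  unfolding istopology_def
proof (rule conjI; intro allI impI)
  fix S T
  assume S: "S \<subseteq> cmaps X m \<and> (\<forall>g\<in>S. \<exists>\<epsilon>. admissible_eps X \<epsilon> \<and> sl_ball X m g \<epsilon> \<subseteq> S)"
     and T: "T \<subseteq> cmaps X m \<and> (\<forall>g\<in>T. \<exists>\<epsilon>. admissible_eps X \<epsilon> \<and> sl_ball X m g \<epsilon> \<subseteq> T)"
  show "S \<inter> T \<subseteq> cmaps X m \<and> (\<forall>g\<in>S \<inter> T. \<exists>\<epsilon>. admissible_eps X \<epsilon> \<and> sl_ball X m g \<epsilon> \<subseteq> S \<inter> T)"
  proof (intro conjI ballI)
    show "S \<inter> T \<subseteq> cmaps X m" using S by blast
    fix g assume g: "g \<in> S \<inter> T"
    obtain e1 where e1: "admissible_eps X e1" "sl_ball X m g e1 \<subseteq> S" using S g by blast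
    obtain e2 where e2: "admissible_eps X e2" "sl_ball X m g e2 \<subseteq> T" using T g by blast
    define e where "e x = min (e1 x) (e2 x)" for x
    have "admissible_eps X e"
      using e1(1) e2(1) unfolding admissible_eps_def e_def
      by (auto intro: continuous_map_real_min)
    moreover have "sl_ball X m g e \<subseteq> sl_ball X m g e1" "sl_ball X m g e \<subseteq> sl_ball X m g e2"
      unfolding sl_ball_def e_def by fastforce+
    ultimately show "\<exists>\<epsilon>. admissible_eps X \<epsilon> \<and> sl_ball X m g \<epsilon> \<subseteq> S \<inter> T"
      using e1(2) e2(2) by blast
  qed
next
  fix \<K> :: "('a \<Rightarrow> 'b) set set"
  assume K: "\<forall>K\<in>\<K>. K \<subseteq> cmaps X m \<and> (\<forall>g\<in>K. \<exists>\<epsilon>. admissible_eps X \<epsilon> \<and> sl_ball X m g \<epsilon> \<subseteq> K)"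
  show "\<Union>\<K> \<subseteq> cmaps X m \<and> (\<forall>g\<in>\<Union>\<K>. \<exists>\<epsilon>. admissible_eps X \<epsilon> \<and> sl_ball X m g \<epsilon> \<subseteq> \<Union>\<K>)"
  proof (intro conjI ballI)
    show "\<Union>\<K> \<subseteq> cmaps X m" using K by blast
    fix g assume "g \<in> \<Union>\<K>"
    then obtain K0 where "K0 \<in> \<K>" "g \<in> K0" by blast
    then obtain e where "admissible_eps X e" "sl_ball X m g e \<subseteq> K0" using K by blast
    then show "\<exists>\<epsilon>. admissible_eps X \<epsilon> \<and> sl_ball X m g \<epsilon> \<subseteq> \<Union>\<K>" using \<open>K0 \<in> \<K>\<close> by blast
  qed
qed

lemma slt_open:
  "openin (source_limitation_topology X m) U \<longleftrightarrow>
     U \<subseteq> cmaps X m \<and> (\<forall>g\<in>U. \<exists>\<epsilon>. admissible_eps X \<epsilon> \<and> sl_ball X m g \<epsilon> \<subseteq> U)"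
  unfolding source_limitation_topology_def topology_inverse'[OF slt_istopology] by (rule refl)

lemma loc_good:
  assumes perf: "perfect_map X Y f" and Zc: "closedin (mtopology_of m) Z" and HY: "H \<subseteq> topspace Y"
    and gc: "continuous_map X (mtopology_of m) g" and y: "y \<in> H"
    and good: "goodk m n k (g ` fibre X f y \<inter> Z)"
  shows "\<exists>\<delta>>0. \<exists>V. openin Y V \<and> y \<in> V \<and> (\<forall>y'\<in>V \<inter> H. \<forall>h\<in>cmaps X m.
           (\<forall>x\<in>fibre X f y'. mdist m (h x) (g x) < \<delta>) \<longrightarrow> goodk m n k (h ` fibre X f y' \<inter> Z))"
proof -
  obtain \<W> where W: "finite \<W>" "\<forall>W\<in>\<W>. openin (mtopology_of m) W \<and> (\<exists>c\<in>mspace m. W \<subseteq> mball_of m c (1 / real (Suc k)))"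
     "g ` fibre X f y \<inter> Z \<subseteq> \<Union>\<W>" "\<forall>x\<in>mspace m. card {W\<in>\<W>. x \<in> W} \<le> n + 1"
    using good unfolding goodk_def by blast
  define G where "G = \<Union>\<W>"
  define F where "F = fibre X f y"
  have yY: "y \<in> topspace Y" using y HY by blast
  have pm: "proper_map X Y f" using perf by (simp add: perfect_map_def)
  have "compactin X {x \<in> topspace X. f x = y}"
    using pm yY unfolding proper_map_def by blast
  then have cF: "compactin X F" by (simp add: F_def fibre_def)
  have FX: "F \<subseteq> topspace X" by (simp add: F_def fibre_def)
  have cK: "compactin (mtopology_of m) (g ` F)" by (rule image_compactin[OF cF gc])
  have gM: "g x \<in> mspace m" if "x \<in> topspace X" for x
    using gc that unfolding continuous_map_def by auto
  have Gopen: "openin (mtopology_of m) G" unfolding G_def using W(2) by blast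
  have MZopen: "openin (mtopology_of m) (mspace m - Z)"
    using Zc unfolding closedin_def by simp
  have "g ` F \<subseteq> \<Union>{G, mspace m - Z}"
  proof
    fix p assume "p \<in> g ` F"
    then obtain x where x: "x \<in> F" "p = g x" by blast
    then have "p \<in> mspace m" using gM FX by blast
    show "p \<in> \<Union>{G, mspace m - Z}"
    proof (cases "p \<in> Z")
      case True
      then have "p \<in> g ` fibre X f y \<inter> Z" using x unfolding F_def by blast
      then have "p \<in> G" using W(3) unfolding G_def by blast
      then show ?thesis by blast
    next
      case False then show ?thesis using \<open>p \<in> mspace m\<close> by blast
    qed
  qed
  then obtain \<epsilon> where e: "\<epsilon> > 0" "\<forall>p \<in> g ` F. \<exists>C \<in> {G, mspace m - Z}. mball_of m p \<epsilon> \<subseteq> C"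
    using lebesgue_m[OF cK, of "{G, mspace m - Z}"] Gopen MZopen by blast
  define \<delta> where "\<delta> = \<epsilon> / 2"
  define N where "N = (\<Union>p\<in>F. {x \<in> topspace X. g x \<in> mball_of m (g p) \<delta>})"
  have Nopen: "openin X N" unfolding N_def
  proof (rule openin_Union)
    fix S assume "S \<in> (\<lambda>p. {x \<in> topspace X. g x \<in> mball_of m (g p) \<delta>}) ` F"
    then obtain p where "S = {x \<in> topspace X. g x \<in> mball_of m (g p) \<delta>}" by blast
    then show "openin X S" using openin_continuous_map_preimage[OF gc openin_mball_of] by simp
  qed
  define V where "V = topspace Y - f ` (topspace X - N)"
  have cm: "closed_map X Y f" using perf unfolding perfect_map_def by (simp add: proper_imp_closed_map)
  have "closedin X (topspace X - N)" using Nopen by (simp add: closedin_diff)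
  then have "closedin Y (f ` (topspace X - N))" using cm unfolding closed_map_def by blast
  then have Vopen: "openin Y V" unfolding V_def by (simp add: openin_diff)
  have FN: "F \<subseteq> N"
  proof
    fix x assume x: "x \<in> F"
    then have "x \<in> topspace X" using FX by blast
    then have "g x \<in> mspace m" using gM by blast
    then have "g x \<in> mball_of m (g x) \<delta>" using e(1) by (simp add: \<delta>_def mdist_self)
    then show "x \<in> N" unfolding N_def using x \<open>x \<in> topspace X\<close> by blast
  qed
  have yV: "y \<in> V"
  proof -
    have "y \<notin> f ` (topspace X - N)"
    proof
      assume "y \<in> f ` (topspace X - N)"
      then obtain x where "x \<in> topspace X" "x \<notin> N" "f x = y" by blast
      then have "x \<in> F" by (simp add: F_def fibre_def)
      then show False using FN \<open>x \<notin> N\<close> by blast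
    qed
    then show ?thesis using yY by (simp add: V_def)
  qed
  show ?thesis
  proof (intro exI conjI ballI impI)
    show "\<delta> > 0" using e(1) by (simp add: \<delta>_def)
    show "openin Y V" by (rule Vopen)
    show "y \<in> V" by (rule yV)
    fix y' h assume y': "y' \<in> V \<inter> H" and h: "h \<in> cmaps X m"
      and close: "\<forall>x\<in>fibre X f y'. mdist m (h x) (g x) < \<delta>"
    have hM: "h x \<in> mspace m" if "x \<in> topspace X" for x
      using h that unfolding cmaps_def continuous_map_def by auto
    have "h ` fibre X f y' \<inter> Z \<subseteq> \<Union>\<W>"
    proof
      fix z assume z: "z \<in> h ` fibre X f y' \<inter> Z"
      then obtain x where x: "x \<in> topspace X" "f x = y'" "z = h x" "z \<in> Z"
        by (auto simp: fibre_def)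
      have "x \<in> N"
      proof (rule ccontr)
        assume "x \<notin> N"
        then have "y' \<in> f ` (topspace X - N)" using x by blast
        then show False using y' by (simp add: V_def)
      qed
      then obtain p where p: "p \<in> F" "g x \<in> mball_of m (g p) \<delta>" unfolding N_def by blast
      have pX: "p \<in> topspace X" using p(1) FX by blast
      have d1: "mdist m (g p) (g x) < \<delta>" using p(2) by simp
      have d2: "mdist m (g x) z < \<delta>"
        using close x by (simp add: fibre_def mdist_commute)
      have "mdist m (g p) z \<le> mdist m (g p) (g x) + mdist m (g x) z"
        by (rule mdist_tri[OF gM[OF pX] gM[OF x(1)]]) (use hM x in simp)
      then have "mdist m (g p) z < \<epsilon>" using d1 d2 by (simp add: \<delta>_def)
      then have zb: "z \<in> mball_of m (g p) \<epsilon>" using gM[OF pX] hM[OF x(1)] x(3) by simp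
      obtain C where C: "C \<in> {G, mspace m - Z}" "mball_of m (g p) \<epsilon> \<subseteq> C" using e(2) p(1) by blast
      have "C = G" using C zb x(4) by blast
      then show "z \<in> \<Union>\<W>" using C(2) zb unfolding G_def by blast
    qed
    then show "goodk m n k (h ` fibre X f y' \<inter> Z)"
      unfolding goodk_def using W(1,2,4) by blast
  qed
qed


lemma O_open:
  assumes perf: "perfect_map X Y f" and PY: "paracompact_space Y"
    and Zc: "closedin (mtopology_of m) Z" and Hc: "closedin Y H"
  shows "openin (source_limitation_topology X m) {g \<in> cmaps X m. \<forall>y\<in>H. goodk m n k (g ` fibre X f y \<inter> Z)}"
  unfolding slt_open
proof (intro conjI ballI)
  show "{g \<in> cmaps X m. \<forall>y\<in>H. goodk m n k (g ` fibre X f y \<inter> Z)} \<subseteq> cmaps X m" by blast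
  fix g assume g: "g \<in> {g \<in> cmaps X m. \<forall>y\<in>H. goodk m n k (g ` fibre X f y \<inter> Z)}"
  have gc: "continuous_map X (mtopology_of m) g" using g by (simp add: cmaps_def)
  have HY: "H \<subseteq> topspace Y" using Hc closedin_subset by blast
  have fc: "continuous_map X Y f" using perf by (simp add: perfect_map_def)
  have "\<forall>y\<in>H. \<exists>\<delta>. \<delta> > 0 \<and> (\<exists>V. openin Y V \<and> y \<in> V \<and> (\<forall>y'\<in>V \<inter> H. \<forall>h\<in>cmaps X m.
           (\<forall>x\<in>fibre X f y'. mdist m (h x) (g x) < \<delta>) \<longrightarrow> goodk m n k (h ` fibre X f y' \<inter> Z)))"
  proof
    fix y assume y: "y \<in> H"
    have "goodk m n k (g ` fibre X f y \<inter> Z)" using g y by blast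
    from loc_good[OF perf Zc HY gc y this] show "\<exists>\<delta>. \<delta> > 0 \<and> (\<exists>V. openin Y V \<and> y \<in> V \<and> (\<forall>y'\<in>V \<inter> H. \<forall>h\<in>cmaps X m.
           (\<forall>x\<in>fibre X f y'. mdist m (h x) (g x) < \<delta>) \<longrightarrow> goodk m n k (h ` fibre X f y' \<inter> Z)))"
      by blast
  qed
  then obtain D where "\<forall>y\<in>H. D y > 0 \<and> (\<exists>V. openin Y V \<and> y \<in> V \<and> (\<forall>y'\<in>V \<inter> H. \<forall>h\<in>cmaps X m.
           (\<forall>x\<in>fibre X f y'. mdist m (h x) (g x) < D y) \<longrightarrow> goodk m n k (h ` fibre X f y' \<inter> Z)))"
    by (rule bchoice[THEN exE])
  then have "\<forall>y\<in>H. \<exists>V. D y > 0 \<and> openin Y V \<and> y \<in> V \<and> (\<forall>y'\<in>V \<inter> H. \<forall>h\<in>cmaps X m.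
           (\<forall>x\<in>fibre X f y'. mdist m (h x) (g x) < D y) \<longrightarrow> goodk m n k (h ` fibre X f y' \<inter> Z))"
    by blast
  then obtain VV where VV: "\<forall>y\<in>H. D y > 0 \<and> openin Y (VV y) \<and> y \<in> VV y \<and> (\<forall>y'\<in>VV y \<inter> H. \<forall>h\<in>cmaps X m.
           (\<forall>x\<in>fibre X f y'. mdist m (h x) (g x) < D y) \<longrightarrow> goodk m n k (h ` fibre X f y' \<inter> Z))"
    by (rule bchoice[THEN exE])
  define I where "I = insert None (Some ` H)"
  define U where "U i = (case i of None \<Rightarrow> topspace Y - H | Some y \<Rightarrow> VV y)" for i
  define c where "c i = (case i of None \<Rightarrow> 1 | Some y \<Rightarrow> D y)" for i
  have "\<forall>i\<in>I. openin Y (U i)"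
  proof
    fix i assume "i \<in> I"
    then show "openin Y (U i)"
    proof (cases i)
      case None then show ?thesis using Hc by (simp add: U_def closedin_def)
    next
      case (Some y) then show ?thesis using \<open>i \<in> I\<close> VV by (auto simp: U_def I_def)
    qed
  qed
  moreover have "\<forall>i\<in>I. 0 < c i"
  proof
    fix i assume "i \<in> I"
    then show "0 < c i"
    proof (cases i)
      case None then show ?thesis by (simp add: c_def)
    next
      case (Some y) then show ?thesis using \<open>i \<in> I\<close> VV by (auto simp: c_def I_def)
    qed
  qed
  moreover have "topspace Y \<subseteq> (\<Union>i\<in>I. U i)"
  proof
    fix y assume y: "y \<in> topspace Y"
    show "y \<in> (\<Union>i\<in>I. U i)"
    proof (cases "y \<in> H")
      case True
      then have "y \<in> U (Some y)" using VV by (simp add: U_def)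
      moreover have "Some y \<in> I" using True by (simp add: I_def)
      ultimately show ?thesis by blast
    next
      case False
      then have "y \<in> U None" using y by (simp add: U_def)
      moreover have "None \<in> I" by (simp add: I_def)
      ultimately show ?thesis by blast
    qed
  qed
  ultimately obtain \<phi> where phi: "continuous_map Y euclideanreal \<phi>"
     "\<forall>y\<in>topspace Y. 0 < \<phi> y \<and> \<phi> y \<le> 1 \<and> (\<exists>i\<in>I. y \<in> U i \<and> \<phi> y \<le> c i)"
    using para_func[OF PY, of I U c] by blast
  define eps where "eps x = \<phi> (f x)" for x
  have fY: "f x \<in> topspace Y" if "x \<in> topspace X" for x
    using fc that unfolding continuous_map_def by auto
  have "admissible_eps X eps"
    unfolding admissible_eps_def
  proof (intro conjI ballI)
    have "continuous_map X euclideanreal (\<phi> \<circ> f)" by (rule continuous_map_compose[OF fc phi(1)])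
    then show "continuous_map X euclideanreal eps" unfolding eps_def o_def .
    fix x assume "x \<in> topspace X"
    then show "0 < eps x" "eps x \<le> 1" using phi(2) fY by (auto simp: eps_def)
  qed
  moreover have "sl_ball X m g eps \<subseteq> {g \<in> cmaps X m. \<forall>y\<in>H. goodk m n k (g ` fibre X f y \<inter> Z)}"
  proof
    fix h assume h: "h \<in> sl_ball X m g eps"
    then have hc: "h \<in> cmaps X m" and hd: "\<forall>x\<in>topspace X. mdist m (h x) (g x) < \<phi> (f x)"
      by (auto simp: sl_ball_def eps_def)
    have "goodk m n k (h ` fibre X f y' \<inter> Z)" if y': "y' \<in> H" for y'
    proof -
      have y'Y: "y' \<in> topspace Y" using y' HY by blast
      then obtain i where i: "i \<in> I" "y' \<in> U i" "\<phi> y' \<le> c i" using phi(2) by blast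
      then obtain y where iy: "i = Some y" using y' by (cases i) (auto simp: U_def)
      then have yH: "y \<in> H" using i(1) by (auto simp: I_def)
      have y'V: "y' \<in> VV y" using i(2) iy by (simp add: U_def)
      have le: "\<phi> y' \<le> D y" using i(3) iy by (simp add: c_def)
      have "\<forall>x\<in>fibre X f y'. mdist m (h x) (g x) < D y"
      proof
        fix x assume "x \<in> fibre X f y'"
        then have "x \<in> topspace X" "f x = y'" by (auto simp: fibre_def)
        then show "mdist m (h x) (g x) < D y" using hd le by fastforce
      qed
      then show ?thesis using VV yH y'V y' hc by blast
    qed
    then show "h \<in> {g \<in> cmaps X m. \<forall>y\<in>H. goodk m n k (g ` fibre X f y \<inter> Z)}" using hc by blast
  qed
  ultimately show "\<exists>\<epsilon>. admissible_eps X \<epsilon> \<and> sl_ball X m g \<epsilon> \<subseteq> {g \<in> cmaps X m. \<forall>y\<in>H. goodk m n k (g ` fibre X f y \<inter> Z)}"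
    by blast
qed

theorem proposition2p4:
  fixes X :: "'a topology" and Y :: "'b topology" and m :: "'m metric"
    and f :: "'a \<Rightarrow> 'b" and n :: nat and Z :: "'m set" and H :: "'b set"
  assumes "mcomplete_of m"
    and "closedin (mtopology_of m) Z"
    and "perfect_map X Y f"
    and "paracompact_space X" and "paracompact_space Y"
    and "map_dim_le X Y f n"
    and "closedin Y H"
    and "(metrizable_space X \<and> metrizable_space Y) \<or> Z = mspace m"
  shows "gdelta_in (source_limitation_topology X m) (Rnf X m f n H Z)"
proof -
  note perf = assms(3) and Zc = assms(2) and PY = assms(5) and Hc = assms(7)
  define Oo where "Oo k = {g \<in> cmaps X m. \<forall>y\<in>H. goodk m n k (g ` fibre X f y \<inter> Z)}" for k
  have Oopen: "openin (source_limitation_topology X m) (Oo k)" for k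
    unfolding Oo_def by (rule O_open[OF perf PY Zc Hc])
  have HY: "H \<subseteq> topspace Y" using Hc closedin_subset by blast
  have pm: "proper_map X Y f" using perf by (simp add: perfect_map_def)
  have cA: "compactin (mtopology_of m) (g ` fibre X f y \<inter> Z)"
    if gc: "continuous_map X (mtopology_of m) g" and y: "y \<in> H" for g y
  proof -
    have "compactin X {x \<in> topspace X. f x = y}" using pm y HY unfolding proper_map_def by blast
    then have "compactin X (fibre X f y)" by (simp add: fibre_def)
    then have "compactin (mtopology_of m) (g ` fibre X f y)" by (rule image_compactin[OF _ gc])
    then have "compactin (mtopology_of m) (Z \<inter> g ` fibre X f y)" by (rule closed_Int_compactin[OF Zc])
    then show ?thesis by (simp add: Int_commute)
  qed
  have eq: "Rnf X m f n H Z = \<Inter>(range Oo)"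
  proof
    show "Rnf X m f n H Z \<subseteq> \<Inter>(range Oo)"
    proof
      fix g assume g: "g \<in> Rnf X m f n H Z"
      then have gm: "g \<in> cmaps X m" and gd: "\<forall>y\<in>H. cov_dim_le (subtopology (mtopology_of m) (g ` fibre X f y \<inter> Z)) n"
        by (auto simp: Rnf_def)
      have gc: "continuous_map X (mtopology_of m) g" using gm by (simp add: cmaps_def)
      have "g \<in> Oo k" for k
        unfolding Oo_def using gm dim_to_good[OF cA[OF gc] ] gd by blast
      then show "g \<in> \<Inter>(range Oo)" by blast
    qed
    show "\<Inter>(range Oo) \<subseteq> Rnf X m f n H Z"
    proof
      fix g assume g: "g \<in> \<Inter>(range Oo)"
      then have gm: "g \<in> cmaps X m" by (auto simp: Oo_def)
      have gc: "continuous_map X (mtopology_of m) g" using gm by (simp add: cmaps_def)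
      have "cov_dim_le (subtopology (mtopology_of m) (g ` fibre X f y \<inter> Z)) n" if y: "y \<in> H" for y
      proof (rule good_to_dim[OF cA[OF gc y]])
        fix k show "goodk m n k (g ` fibre X f y \<inter> Z)" using g y by (auto simp: Oo_def)
      qed
      then show "g \<in> Rnf X m f n H Z" using gm by (simp add: Rnf_def)
    qed
  qed
  show ?thesis
    unfolding gdelta_in_alt
  proof
    show "Rnf X m f n H Z \<subseteq> topspace (source_limitation_topology X m)"
      using eq openin_subset[OF Oopen[of 0]] by blast
    show "(countable intersection_of openin (source_limitation_topology X m)) (Rnf X m f n H Z)"
      unfolding intersection_of_def eq
      by (rule exI[of _ "range Oo"]) (use Oopen in auto)
  qed
qed


end
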